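(* Let $q \geq 1$ and let $k$ be a positive integer with $k < n$. Let $\boldsymbol{B} = [\boldsymbol{B}[1] \ \cdots \ \boldsymbol{B}[n]] \in \mathbb{R}^{D \times N}$ be a dictionary with unit-norm columns, blocks $\boldsymbol{B}[i] \in \mathbb{R}^{D \times m_i}$, and pairwise disjoint block subspaces $\mathcal{S}_i = \operatorname{span}(\boldsymbol{B}[i])$. Assume that every signal $\boldsymbol{y} \in \mathbb{R}^D$ that admits a $k$-block-sparse representation admits a unique one. For an index set $\Lambda \subseteq \{1,\dots,n\}$ and $\boldsymbol{x} \in \bigoplus_{i \in \Lambda} \mathcal{S}_i$ let $$V_\Lambda(\boldsymbol{x}) = \min\Big\{ \sum_{i \in \Lambda} \|\boldsymbol{c}[i]\|_q \;:\; \boldsymbol{x} = \sum_{i \in \Lambda} \boldsymbol{B}[i]\boldsymbol{c}[i] \Big\}.$$ Then the following are equivalent: (i) for every set $\Lambda_k \subseteq \{1,\dots,n\}$ with $|\Lambda_k| = k$ and every $\boldsymbol{y} \in \bigoplus_{i \in \Lambda_k} \mathcal{S}_i$, every optimal solution $\boldsymbol{c}^*$ of $P_{\ell_q/\ell_1}(\boldsymbol{y})$ satisfies $\boldsymbol{c}^*[i] = \boldsymbol{0}$ for all $i \notin \Lambda_k$ (i.e. the solution of $P_{\ell_q/\ell_1}$ coincides with the $k$-block-sparse solution of $P_{\ell_q/\ell_0}$); (ii) for every $\Lambda_k \subseteq \{1,\dots,n\}$ with $|\Lambda_k| = k$, writing $\widehat{\Lambda}_k = \{1,\dots,n\} \setminus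 \Lambda_k$, and every nonzero $\boldsymbol{x} \in \big(\bigoplus_{i \in \Lambda_k} \mathcal{S}_i\big) \cap \big(\bigoplus_{i \in \widehat{\Lambda}_k} \mathcal{S}_i\big)$, one has $V_{\Lambda_k}(\boldsymbol{x}) < V_{\widehat{\Lambda}_k}(\boldsymbol{x})$.
   Context: The dictionary $\boldsymbol{B} \in \mathbb{R}^{D\times N}$ has columns of unit Euclidean norm and is partitioned into $n$ blocks $\boldsymbol{B}[i] \in \mathbb{R}^{D \times m_i}$, $\sum_i m_i = N$; blocks may have linearly dependent columns. $\mathcal{S}_i$ is the column span of $\boldsymbol{B}[i]$; the subspaces are disjoint, meaning $\mathcal{S}_i \cap \mathcal{S}_j = \{0\}$ for $i \neq j$. A vector $\boldsymbol{c} \in \mathbb{R}^N$ is written $\boldsymbol{c} = (\boldsymbol{c}[1]; \dots; \boldsymbol{c}[n])$ with $\boldsymbol{c}[i] \in \mathbb{R}^{m_i}$, so $\boldsymbol{B}\boldsymbol{c} = \sum_i \boldsymbol{B}[i]\boldsymbol{c}[i]$. A $k$-block-sparse representation of $\boldsymbol{y}$ is an expression $\boldsymbol{y} = \sum_{i \in \Lambda} \boldsymbol{s}_i$ with $\Lambda \subseteq \{1,\dots,n\}$, $|\Lambda| \le k$, $\boldsymbol{s}_i \in \mathcal{S}_i \setminus \{0\}$; it is unique if any two such expressions have the same index set $\Lambda$ and the same vectors $\boldsymbol{s}_i$. $P_{\ell_q/\ell_1}(\boldsymbol{y})$ is the convex program $\min_{\boldsymbol{c}} \sum_{i=1}^n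 \|\boldsymbol{c}[i]\|_q$ subject to $\boldsymbol{y} = \boldsymbol{B}\boldsymbol{c}$; $P_{\ell_q/\ell_0}(\boldsymbol{y})$ is $\min_{\boldsymbol{c}} \#\{i : \|\boldsymbol{c}[i]\|_q \neq 0\}$ subject to $\boldsymbol{y} = \boldsymbol{B}\boldsymbol{c}$. $\bigoplus$ denotes the (direct) sum of subspaces. *)

theory Defs
  imports "HOL-Analysis.Analysis"
begin

text \<open>Dictionary: block i (1 \<le> i \<le> n) has columns b i j for j < m i, vectors in R^D = real^'d.
 A coefficient vector c is represented as c :: nat \<Rightarrow> nat \<Rightarrow> real, with c i j the j-th
 entry of the block c[i]; only entries i \<in> {1..n}, j < m i are meaningful.\<close>

definition block_span :: "(nat \<Rightarrow> nat \<Rightarrow> real^'d) \<Rightarrow> (nat \<Rightarrow> nat) \<Rightarrow> nat \<Rightarrow> (real^'d) set" where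
  "block_span b m i = span (b i ` {..<m i})"

definition block_apply :: "(nat \<Rightarrow> nat \<Rightarrow> real^'d) \<Rightarrow> (nat \<Rightarrow> nat) \<Rightarrow> (nat \<Rightarrow> nat \<Rightarrow> real) \<Rightarrow> nat \<Rightarrow> real^'d" where
  "block_apply b m c i = (\<Sum>j<m i. c i j *\<^sub>R b i j)"

definition dict_apply :: "(nat \<Rightarrow> nat \<Rightarrow> real^'d) \<Rightarrow> (nat \<Rightarrow> nat) \<Rightarrow> nat set \<Rightarrow> (nat \<Rightarrow> nat \<Rightarrow> real) \<Rightarrow> real^'d" where
  "dict_apply b m L c = (\<Sum>i\<in>L. block_apply b m c i)"

definition block_norm :: "real \<Rightarrow> (nat \<Rightarrow> nat) \<Rightarrow> (nat \<Rightarrow> nat \<Rightarrow> real) \<Rightarrow> nat \<Rightarrow> real" where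
  "block_norm q m c i = (\<Sum>j<m i. \<bar>c i j\<bar> powr q) powr (1 / q)"

definition block_zero :: "(nat \<Rightarrow> nat) \<Rightarrow> (nat \<Rightarrow> nat \<Rightarrow> real) \<Rightarrow> nat \<Rightarrow> bool" where
  "block_zero m c i \<longleftrightarrow> (\<forall>j<m i. c i j = 0)"

definition block_sum_space :: "(nat \<Rightarrow> nat \<Rightarrow> real^'d) \<Rightarrow> (nat \<Rightarrow> nat) \<Rightarrow> nat set \<Rightarrow> (real^'d) set" where
  "block_sum_space b m L = span (\<Union>i\<in>L. block_span b m i)"

definition is_kbs_rep :: "(nat \<Rightarrow> nat \<Rightarrow> real^'d) \<Rightarrow> (nat \<Rightarrow> nat) \<Rightarrow> nat \<Rightarrow> nat \<Rightarrow> real^'d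
    \<Rightarrow> nat set \<Rightarrow> (nat \<Rightarrow> real^'d) \<Rightarrow> bool" where
  "is_kbs_rep b m n k y L s \<longleftrightarrow> L \<subseteq> {1..n} \<and> card L \<le> k \<and>
     (\<forall>i\<in>L. s i \<in> block_span b m i - {0}) \<and> y = (\<Sum>i\<in>L. s i)"

definition unique_kbs :: "(nat \<Rightarrow> nat \<Rightarrow> real^'d) \<Rightarrow> (nat \<Rightarrow> nat) \<Rightarrow> nat \<Rightarrow> nat \<Rightarrow> bool" where
  "unique_kbs b m n k \<longleftrightarrow> (\<forall>y L s L' s'. is_kbs_rep b m n k y L s \<and> is_kbs_rep b m n k y L' s'
      \<longrightarrow> L = L' \<and> (\<forall>i\<in>L. s i = s' i))"

text \<open>V_L(x) = min { sum_{i in L} ||c[i]||_q : x = sum_{i in L} B[i] c[i] } (the minimum is attained,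
  so it equals the infimum).\<close>
definition V :: "(nat \<Rightarrow> nat \<Rightarrow> real^'d) \<Rightarrow> (nat \<Rightarrow> nat) \<Rightarrow> real \<Rightarrow> nat set \<Rightarrow> real^'d \<Rightarrow> real" where
  "V b m q L x = Inf {(\<Sum>i\<in>L. block_norm q m c i) | c. x = dict_apply b m L c}"

definition opt_lq_l1 :: "(nat \<Rightarrow> nat \<Rightarrow> real^'d) \<Rightarrow> (nat \<Rightarrow> nat) \<Rightarrow> nat \<Rightarrow> real \<Rightarrow> real^'d
    \<Rightarrow> (nat \<Rightarrow> nat \<Rightarrow> real) \<Rightarrow> bool" where
  "opt_lq_l1 b m n q y c \<longleftrightarrow> y = dict_apply b m {1..n} c \<and>
     (\<forall>c'. y = dict_apply b m {1..n} c' \<longrightarrow>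
        (\<Sum>i\<in>{1..n}. block_norm q m c i) \<le> (\<Sum>i\<in>{1..n}. block_norm q m c' i))"

end

theory Submission
  imports Defs
begin


lemma convex_powr_nonneg:
  fixes a b t q :: real
  assumes "q \<ge> 1" "0 \<le> a" "0 \<le> b" "0 \<le> t" "t \<le> 1"
  shows "(t*a + (1-t)*b) powr q \<le> t * a powr q + (1-t) * b powr q"
proof -
  have sc: "(s*x) powr q \<le> s * x powr q" if "0 \<le> s" "s \<le> 1" "0 \<le> x" for s x :: real
  proof -
    have "(s*x) powr q = s powr q * x powr q" by (simp add: powr_mult)
    also have "s powr q \<le> s powr 1" using powr_mono'[of 1 q s] that assms(1) by simp
    hence "s powr q * x powr q \<le> s * x powr q" using that by (simp add: mult_right_mono)
    finally show ?thesis .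
  qed
  show ?thesis
  proof (cases "a = 0 \<or> b = 0 \<or> t = 0 \<or> t = 1")
    case True
    then show ?thesis
    proof (elim disjE)
      assume "a = 0" thus ?thesis using sc[of "1-t" b] assms by simp
    next
      assume "b = 0" thus ?thesis using sc[of t a] assms by simp
    next
      assume "t = 0" thus ?thesis using assms by simp
    next
      assume "t = 1" thus ?thesis using assms by simp
    qed
  next
    case False
    hence "a > 0" "b > 0" using assms by auto
    thus ?thesis using convex_onD[OF powr_convex[OF assms(1)], of t b a] assms by (simp add: algebra_simps)
  qed
qed

lemma minkowski:
  fixes u v :: "nat \<Rightarrow> real" and q :: real
  assumes "finite J" "q \<ge> 1"
  shows "(\<Sum>j\<in>J. \<bar>u j + v j\<bar> powr q) powr (1/q)
     \<le> (\<Sum>j\<in>J. \<bar>u j\<bar> powr q) powr (1/q) + (\<Sum>j\<in>J. \<bar>v j\<bar> powr q) powr (1/q)"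
proof -
  define SA where "SA = (\<Sum>j\<in>J. \<bar>u j\<bar> powr q)"
  define SB where "SB = (\<Sum>j\<in>J. \<bar>v j\<bar> powr q)"
  define A where "A = SA powr (1/q)"
  define B where "B = SB powr (1/q)"
  have SA0: "SA \<ge> 0" "SB \<ge> 0" unfolding SA_def SB_def by (simp_all add: sum_nonneg)
  have ApA: "A powr q = SA" using SA0 assms(2) unfolding A_def by (simp add: powr_powr powr_one)
  have BpB: "B powr q = SB" using SA0 assms(2) unfolding B_def by (simp add: powr_powr powr_one)
  show ?thesis
  proof (cases "A = 0 \<or> B = 0")
    case True
    then show ?thesis
    proof
      assume "A = 0"
      hence "SA = 0" unfolding A_def by simp
      hence "\<forall>j\<in>J. u j = 0" unfolding SA_def using assms(1) by (simp add: sum_nonneg_eq_0_iff)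
      thus ?thesis unfolding A_def[symmetric] \<open>A = 0\<close> by simp
    next
      assume "B = 0"
      hence "SB = 0" unfolding B_def by simp
      hence "\<forall>j\<in>J. v j = 0" unfolding SB_def using assms(1) by (simp add: sum_nonneg_eq_0_iff)
      thus ?thesis unfolding B_def[symmetric] \<open>B = 0\<close> by simp
    qed
  next
    case False
    hence Ap: "A > 0" and Bp: "B > 0" unfolding A_def B_def
      by (metis less_eq_real_def powr_ge_zero)+
    define t where "t = A / (A+B)"
    have t0: "0 \<le> t" "t \<le> 1" using Ap Bp unfolding t_def by auto
    have pt: "(\<bar>u j + v j\<bar> / (A+B)) powr q
        \<le> t * (\<bar>u j\<bar>/A) powr q + (1-t) * (\<bar>v j\<bar>/B) powr q" for j
    proof -
      have t1: "1 - t = B/(A+B)" using Ap Bp unfolding t_def by (simp add: field_simps)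
      have e: "t * (\<bar>u j\<bar>/A) + (1-t) * (\<bar>v j\<bar>/B) = (\<bar>u j\<bar> + \<bar>v j\<bar>) / (A+B)"
        using Ap Bp unfolding t1 unfolding t_def by (simp add: add_divide_distrib)
      have "(\<bar>u j + v j\<bar> / (A+B)) powr q \<le> ((\<bar>u j\<bar> + \<bar>v j\<bar>) / (A+B)) powr q"
        using Ap Bp assms(2) by (intro powr_mono2) (auto simp: divide_right_mono)
      also have "\<dots> \<le> t * (\<bar>u j\<bar>/A) powr q + (1-t) * (\<bar>v j\<bar>/B) powr q"
        using convex_powr_nonneg[OF assms(2), of "\<bar>u j\<bar>/A" "\<bar>v j\<bar>/B" t] Ap Bp t0 e by simp
      finally show ?thesis .
    qed
    have "(\<Sum>j\<in>J. \<bar>u j + v j\<bar> powr q) / (A+B) powr q = (\<Sum>j\<in>J. (\<bar>u j + v j\<bar> / (A+B)) powr q)"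
      by (simp add: powr_divide sum_divide_distrib)
    also have "\<dots> \<le> (\<Sum>j\<in>J. t * (\<bar>u j\<bar>/A) powr q + (1-t) * (\<bar>v j\<bar>/B) powr q)"
      by (rule sum_mono) (rule pt)
    also have "\<dots> = t * (SA / A powr q) + (1-t) * (SB / B powr q)"
      unfolding SA_def SB_def by (simp add: sum.distrib sum_distrib_left powr_divide sum_divide_distrib)
    also have "\<dots> = 1"
    proof -
      have h1: "SA / A powr q = 1" using ApA Ap by (metis divide_self less_irrefl powr_eq_0_iff)
      have h2: "SB / B powr q = 1" using BpB Bp by (metis divide_self less_irrefl powr_eq_0_iff)
      show ?thesis unfolding h1 h2 by simp
    qed
    finally have "(\<Sum>j\<in>J. \<bar>u j + v j\<bar> powr q) \<le> (A+B) powr q"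
      using Ap Bp by (simp add: divide_le_eq)
    hence "(\<Sum>j\<in>J. \<bar>u j + v j\<bar> powr q) powr (1/q) \<le> ((A+B) powr q) powr (1/q)"
      using assms(2) by (intro powr_mono2) (auto simp: sum_nonneg)
    also have "\<dots> = A + B" using Ap Bp assms(2) by (simp add: powr_powr powr_one)
    finally show ?thesis unfolding A_def B_def SA_def SB_def .
  qed
qed



lemma bn_nonneg: "block_norm q m c i \<ge> 0" by (simp add: block_norm_def)

lemma bn_zero: assumes "q > 0" shows "block_norm q m c i = 0 \<longleftrightarrow> block_zero m c i"
proof -
  have "block_norm q m c i = 0 \<longleftrightarrow> (\<Sum>j<m i. \<bar>c i j\<bar> powr q) = 0" by (simp add: block_norm_def)
  also have "\<dots> \<longleftrightarrow> (\<forall>j<m i. \<bar>c i j\<bar> powr q = 0)" by (auto simp: sum_nonneg_eq_0_iff)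
  also have "\<dots> \<longleftrightarrow> block_zero m c i" by (auto simp: block_zero_def)
  finally show ?thesis .
qed

lemma bn_triangle: assumes "q \<ge> 1"
  shows "block_norm q m (\<lambda>i j. c i j + d i j) i \<le> block_norm q m c i + block_norm q m d i"
  unfolding block_norm_def using minkowski[of "{..<m i}" q "c i" "d i"] assms by simp

lemma coord_le: assumes "q > 0" "j < m i" shows "\<bar>c i j\<bar> \<le> block_norm q m c i"
proof -
  have "\<bar>c i j\<bar> powr q \<le> (\<Sum>j<m i. \<bar>c i j\<bar> powr q)"
    using assms by (intro member_le_sum) auto
  hence "(\<bar>c i j\<bar> powr q) powr (1/q) \<le> (\<Sum>j<m i. \<bar>c i j\<bar> powr q) powr (1/q)"
    using assms by (intro powr_mono2) auto
  thus ?thesis using assms by (simp add: block_norm_def powr_powr)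
qed

lemma dict_apply_add:
  "dict_apply b m L (\<lambda>i j. c i j + d i j) = dict_apply b m L c + dict_apply b m L d"
  by (simp add: dict_apply_def block_apply_def scaleR_add_left sum.distrib)

lemma bz_apply: "block_zero m c i \<Longrightarrow> block_apply b m c i = 0"
  by (simp add: block_zero_def block_apply_def)

lemma dict_restrict:
  assumes "finite M" "L \<subseteq> M"
  shows "dict_apply b m M (\<lambda>i j. if i \<in> L then f i j else 0) = dict_apply b m L f"
proof -
  have "dict_apply b m M (\<lambda>i j. if i \<in> L then f i j else 0)
      = dict_apply b m L (\<lambda>i j. if i \<in> L then f i j else 0)"
    unfolding dict_apply_def using assms
    by (intro sum.mono_neutral_cong_right) (auto simp: block_apply_def)
  also have "\<dots> = dict_apply b m L f"
    unfolding dict_apply_def by (intro sum.cong) (auto simp: block_apply_def)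
  finally show ?thesis .
qed

lemma cost_restrict:
  assumes "finite M" "L \<subseteq> M"
  shows "(\<Sum>i\<in>M. block_norm q m (\<lambda>i j. if i \<in> L then f i j else 0) i) = (\<Sum>i\<in>L. block_norm q m f i)"
proof -
  have "(\<Sum>i\<in>M. block_norm q m (\<lambda>i j. if i \<in> L then f i j else 0) i)
      = (\<Sum>i\<in>L. block_norm q m (\<lambda>i j. if i \<in> L then f i j else 0) i)"
    using assms by (intro sum.mono_neutral_cong_right) (auto simp: block_norm_def)
  also have "\<dots> = (\<Sum>i\<in>L. block_norm q m f i)"
    by (intro sum.cong) (auto simp: block_norm_def)
  finally show ?thesis .
qed

lemma coord_cont: "continuous_on S (\<lambda>c::nat\<Rightarrow>nat\<Rightarrow>real. c i j)"
proof -
  have "continuous_on S (\<lambda>c::nat\<Rightarrow>nat\<Rightarrow>real. c i)"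
    by (rule continuous_on_product_then_coordinatewise[OF continuous_on_id])
  thus ?thesis by (rule continuous_on_product_then_coordinatewise)
qed

lemma inner_compact: fixes box :: "nat \<Rightarrow> nat \<Rightarrow> real set"
  assumes "\<And>i j. compact (box i j)"
  shows "compact (Pi\<^sub>E UNIV (box i))"
proof -
  have "compactin (product_topology (\<lambda>_. euclidean) UNIV) (Pi\<^sub>E UNIV (box i))"
    unfolding compactin_PiE using assms by simp
  thus ?thesis by (simp add: euclidean_product_topology)
qed
lemma cbox_lemma: fixes box :: "nat \<Rightarrow> nat \<Rightarrow> real set"
  assumes "\<And>i j. compact (box i j)"
  shows "compact {c::nat\<Rightarrow>nat\<Rightarrow>real. \<forall>i j. c i j \<in> box i j}"
proof -
  have "compactin (product_topology (\<lambda>_. euclidean) UNIV) (Pi\<^sub>E UNIV (\<lambda>i. Pi\<^sub>E UNIV (box i)))"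
  proof -
    have "\<And>i. compact (Pi\<^sub>E UNIV (box i))" by (rule inner_compact[OF assms])
    thus ?thesis unfolding compactin_PiE by simp
  qed
  hence "compact (Pi\<^sub>E UNIV (\<lambda>i. Pi\<^sub>E UNIV (box i)))" by (simp add: euclidean_product_topology)
  moreover have "Pi\<^sub>E UNIV (\<lambda>i. Pi\<^sub>E UNIV (box i)) = {c. \<forall>i j. c i j \<in> box i j}"
    by (auto simp: PiE_UNIV_domain)
  ultimately show ?thesis by simp
qed

lemma exists_min:
  assumes "finite L" "q \<ge> 1" "x = dict_apply b m L c0"
  shows "\<exists>c. x = dict_apply b m L c \<and> (\<forall>c'. x = dict_apply b m L c' \<longrightarrow>
           (\<Sum>i\<in>L. block_norm q m c i) \<le> (\<Sum>i\<in>L. block_norm q m c' i))"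
proof -
  define cost where "cost c = (\<Sum>i\<in>L. block_norm q m c i)" for c
  define R where "R = cost c0"
  define box where "box i j = (if i \<in> L \<and> j < m i then {-R..R} else {0::real})" for i j
  define K where "K = {c. (\<forall>i j. c i j \<in> box i j)} \<inter> {c. dict_apply b m L c = x}"
  define rs where "rs c = (\<lambda>i j. if i \<in> L \<and> j < m i then c i j else 0)" for c :: "nat \<Rightarrow> nat \<Rightarrow> real"
  have rs_apply: "dict_apply b m L (rs c) = dict_apply b m L c" for c
    unfolding dict_apply_def block_apply_def rs_def by (intro sum.cong) auto
  have rs_cost: "cost (rs c) = cost c" for c
    unfolding cost_def block_norm_def rs_def by (intro sum.cong) auto
  have rs_K: "rs c \<in> K" if "x = dict_apply b m L c" "cost c \<le> R" for c
  proof -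
    have "-R \<le> c i j \<and> c i j \<le> R" if "i \<in> L" "j < m i" for i j
    proof -
      have "\<bar>c i j\<bar> \<le> block_norm q m c i" using coord_le[of q j m i c] assms(2) that by simp
      also have "\<dots> \<le> cost c" unfolding cost_def using assms(1) that
        by (intro member_le_sum) (auto simp: bn_nonneg)
      finally show ?thesis using \<open>cost c \<le> R\<close> by (auto simp: abs_le_iff)
    qed
    thus ?thesis unfolding K_def using that rs_apply by (auto simp: rs_def box_def)
  qed
  have cbox: "compact {c::nat\<Rightarrow>nat\<Rightarrow>real. \<forall>i j. c i j \<in> box i j}"
    by (rule cbox_lemma[where box=box]) (simp add: box_def split: if_split)
  have contd: "continuous_on UNIV (dict_apply b m L)"
    unfolding dict_apply_def block_apply_def
    by (intro continuous_intros coord_cont)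
  have cl: "closed {c. dict_apply b m L c = x}"
    by (rule closed_Collect_eq[OF contd]) (rule continuous_on_const)
  have cK: "compact K" unfolding K_def by (rule compact_Int_closed[OF cbox cl])
  have neK: "K \<noteq> {}" using rs_K[OF assms(3)] R_def by auto
  have contc: "continuous_on K cost"
  proof -
    have c1: "continuous_on K (\<lambda>c. \<bar>c i j\<bar> powr q)" for i j
      by (rule continuous_on_powr'[OF continuous_on_rabs[OF coord_cont] continuous_on_const])
         (use assms(2) in auto)
    have c2: "continuous_on K (\<lambda>c. (\<Sum>j<m i. \<bar>c i j\<bar> powr q))" for i
      by (rule continuous_on_sum) (rule c1)
    have c3: "continuous_on K (\<lambda>c. (\<Sum>j<m i. \<bar>c i j\<bar> powr q) powr (1/q))" for i
      by (rule continuous_on_powr'[OF c2 continuous_on_const])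
         (use assms(2) in \<open>auto simp: sum_nonneg\<close>)
    show ?thesis unfolding cost_def block_norm_def
      by (rule continuous_on_sum) (rule c3)
  qed
  obtain cs where cs: "cs \<in> K" "\<forall>y\<in>K. cost cs \<le> cost y"
    using continuous_attains_inf[OF cK neK contc] by blast
  show ?thesis
  proof (intro exI conjI allI impI)
    show "x = dict_apply b m L cs" using cs(1) unfolding K_def by simp
  next
    fix c' assume c': "x = dict_apply b m L c'"
    show "(\<Sum>i\<in>L. block_norm q m cs i) \<le> (\<Sum>i\<in>L. block_norm q m c' i)"
    proof (cases "cost c' \<le> R")
      case True
      have "cost cs \<le> cost (rs c')" using cs(2) rs_K[OF c' True] by blast
      thus ?thesis using rs_cost[of c'] unfolding cost_def by simp
    next
      case False
      have "cost cs \<le> cost (rs c0)" using cs(2) rs_K[OF assms(3)] R_def by simp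
      thus ?thesis using False rs_cost R_def unfolding cost_def by simp
    qed
  qed
qed



lemma block_apply_in: "block_apply b m c i \<in> block_span b m i"
  unfolding block_apply_def block_span_def
  by (intro span_sum span_scale span_base) auto

lemma dict_apply_in: "dict_apply b m L c \<in> block_sum_space b m L"
  unfolding dict_apply_def block_sum_space_def
proof (intro span_sum)
  fix i assume "i \<in> L"
  thus "block_apply b m c i \<in> span (\<Union>i\<in>L. block_span b m i)"
    using block_apply_in[of b m c i] by (intro span_base) auto
qed

lemma dict_apply_scale: "dict_apply b m L (\<lambda>i j. a * c i j) = a *\<^sub>R dict_apply b m L c"
  by (simp add: dict_apply_def block_apply_def scaleR_sum_right)

lemma dict_apply_zero: "dict_apply b m L (\<lambda>i j. 0) = 0"
  by (simp add: dict_apply_def block_apply_def)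

lemma cost_zero: "(\<Sum>i\<in>L. block_norm q m (\<lambda>i j. 0) i) = 0"
  by (simp add: block_norm_def)

lemma sum_space_rep:
  assumes "finite L" "y \<in> block_sum_space b m L"
  shows "\<exists>c. y = dict_apply b m L c"
proof -
  define T where "T = range (dict_apply b m L)"
  have sT: "subspace T" unfolding subspace_def T_def
  proof (intro conjI ballI allI)
    show "0 \<in> range (dict_apply b m L)" using dict_apply_zero[of b m L] by (metis rangeI)
  next
    fix u v assume "u \<in> range (dict_apply b m L)" "v \<in> range (dict_apply b m L)"
    then obtain c d where "u = dict_apply b m L c" "v = dict_apply b m L d" by auto
    thus "u + v \<in> range (dict_apply b m L)" using dict_apply_add[of b m L c d, symmetric] by auto
  next
    fix a :: real and u assume "u \<in> range (dict_apply b m L)"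
    then obtain c where "u = dict_apply b m L c" by auto
    thus "a *\<^sub>R u \<in> range (dict_apply b m L)" using dict_apply_scale[of b m L a c, symmetric] by auto
  qed
  have "block_span b m i \<subseteq> T" if "i \<in> L" for i
    unfolding block_span_def
  proof (rule span_minimal[OF _ sT], rule subsetI)
    fix v assume "v \<in> b i ` {..<m i}"
    then obtain j where j: "j < m i" "v = b i j" by auto
    define e where "e = (\<lambda>i' j'. if i' = i \<and> j' = j then 1 else (0::real))"
    have ba: "block_apply b m e i' = (if i' = i then b i j else 0)" for i'
    proof (cases "i' = i")
      case True
      have "block_apply b m e i' = (\<Sum>j'<m i. (if j' = j then b i j else 0))"
        unfolding block_apply_def e_def True by (intro sum.cong) auto
      also have "\<dots> = b i j" using j(1) by simp
      finally show ?thesis using True by simp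
    next
      case False thus ?thesis unfolding block_apply_def e_def by simp
    qed
    have "dict_apply b m L e = b i j"
      unfolding dict_apply_def ba using that assms(1) by simp
    thus "v \<in> T" unfolding T_def j(2) by (metis rangeI)
  qed
  hence "(\<Union>i\<in>L. block_span b m i) \<subseteq> T" by blast
  hence "block_sum_space b m L \<subseteq> T" unfolding block_sum_space_def by (rule span_minimal[OF _ sT])
  thus ?thesis using assms(2) unfolding T_def by auto
qed

lemma V_lower:
  assumes "x = dict_apply b m L c"
  shows "V b m q L x \<le> (\<Sum>i\<in>L. block_norm q m c i)"
  unfolding V_def
proof (rule cInf_lower)
  show "(\<Sum>i\<in>L. block_norm q m c i) \<in> {\<Sum>i\<in>L. block_norm q m c i |c. x = dict_apply b m L c}"
    using assms by blast
  show "bdd_below {\<Sum>i\<in>L. block_norm q m c i |c. x = dict_apply b m L c}"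
    by (rule bdd_belowI[of _ 0]) (auto intro: sum_nonneg bn_nonneg)
qed

lemma V_less:
  assumes "V b m q L x < t" "x = dict_apply b m L c0"
  shows "\<exists>d. x = dict_apply b m L d \<and> (\<Sum>i\<in>L. block_norm q m d i) < t"
proof -
  have "{\<Sum>i\<in>L. block_norm q m c i |c. x = dict_apply b m L c} \<noteq> {}" using assms(2) by blast
  from cInf_lessD[OF this assms(1)[unfolded V_def]] show ?thesis by blast
qed

lemma V_eq:
  assumes "x = dict_apply b m L c"
    "\<forall>c'. x = dict_apply b m L c' \<longrightarrow> (\<Sum>i\<in>L. block_norm q m c i) \<le> (\<Sum>i\<in>L. block_norm q m c' i)"
  shows "V b m q L x = (\<Sum>i\<in>L. block_norm q m c i)"
  unfolding V_def using assms by (intro cInf_eq_minimum) auto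



theorem theorem1:
  fixes b :: "nat \<Rightarrow> nat \<Rightarrow> real^'d" and m :: "nat \<Rightarrow> nat" and n k :: nat and q :: real
  assumes "q \<ge> 1" and "0 < k" and "k < n"
    and "\<forall>i\<in>{1..n}. 0 < m i"
    and "\<forall>i\<in>{1..n}. \<forall>j<m i. norm (b i j) = 1"
    and "\<forall>i\<in>{1..n}. \<forall>j\<in>{1..n}. i \<noteq> j \<longrightarrow> block_span b m i \<inter> block_span b m j = {0}"
    and "unique_kbs b m n k"
  shows "(\<forall>L. L \<subseteq> {1..n} \<and> card L = k \<longrightarrow>
            (\<forall>y\<in>block_sum_space b m L. \<forall>c. opt_lq_l1 b m n q y c \<longrightarrow>
               (\<forall>i\<in>{1..n} - L. block_zero m c i)))
     \<longleftrightarrow>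
         (\<forall>L. L \<subseteq> {1..n} \<and> card L = k \<longrightarrow>
            (\<forall>x\<in>block_sum_space b m L \<inter> block_sum_space b m ({1..n} - L). x \<noteq> 0 \<longrightarrow>
               V b m q L x < V b m q ({1..n} - L) x))"
proof
  have q1: "q \<ge> 1" and q0: "q > 0" using assms(1) by auto
  assume H1: "\<forall>L. L \<subseteq> {1..n} \<and> card L = k \<longrightarrow>
            (\<forall>y\<in>block_sum_space b m L. \<forall>c. opt_lq_l1 b m n q y c \<longrightarrow>
               (\<forall>i\<in>{1..n} - L. block_zero m c i))"
  show "\<forall>L. L \<subseteq> {1..n} \<and> card L = k \<longrightarrow>
            (\<forall>x\<in>block_sum_space b m L \<inter> block_sum_space b m ({1..n} - L). x \<noteq> 0 \<longrightarrow>
               V b m q L x < V b m q ({1..n} - L) x)"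
  proof (intro allI impI ballI)
    fix L x assume L: "L \<subseteq> {1..n} \<and> card L = k"
      and x: "x \<in> block_sum_space b m L \<inter> block_sum_space b m ({1..n} - L)" and x0: "x \<noteq> 0"
    define Lc where "Lc = {1..n} - L"
    have fL: "finite L" using L finite_subset by blast
    have fLc: "finite Lc" unfolding Lc_def by simp
    show "V b m q L x < V b m q ({1..n} - L) x"
    proof (rule ccontr)
      assume nl: "\<not> V b m q L x < V b m q ({1..n} - L) x"
      obtain c where cx: "x = dict_apply b m L c" using sum_space_rep[OF fL] x by blast
      obtain c1a where "x = dict_apply b m Lc c1a" using sum_space_rep[OF fLc] x unfolding Lc_def by blast
      then obtain c1 where c1: "x = dict_apply b m Lc c1"
        "\<forall>c'. x = dict_apply b m Lc c' \<longrightarrow> (\<Sum>i\<in>Lc. block_norm q m c1 i) \<le> (\<Sum>i\<in>Lc. block_norm q m c' i)"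
        using exists_min[OF fLc q1] by blast
      have "x = dict_apply b m {1..n} (\<lambda>i j. if i \<in> L then c i j else 0)"
        using dict_restrict[of "{1..n}" L b m c] L cx by simp
      then obtain cst where cst: "x = dict_apply b m {1..n} cst"
        "\<forall>c'. x = dict_apply b m {1..n} c' \<longrightarrow> (\<Sum>i\<in>{1..n}. block_norm q m cst i) \<le> (\<Sum>i\<in>{1..n}. block_norm q m c' i)"
        using exists_min[OF _ q1, of "{1..n}"] by blast
      have opt_st: "opt_lq_l1 b m n q x cst" unfolding opt_lq_l1_def using cst by blast
      have xL: "x \<in> block_sum_space b m L" using x by blast
      have bz: "\<forall>i\<in>{1..n} - L. block_zero m cst i" using H1 L xL opt_st by blast
      have "dict_apply b m {1..n} cst = dict_apply b m L cst"
        unfolding dict_apply_def using L bz by (intro sum.mono_neutral_right) (auto simp: bz_apply)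
      hence xLst: "x = dict_apply b m L cst" using cst(1) by simp
      have cstL: "(\<Sum>i\<in>{1..n}. block_norm q m cst i) = (\<Sum>i\<in>L. block_norm q m cst i)"
        using L bz bn_zero[OF q0] by (intro sum.mono_neutral_right) auto
      define c0 where "c0 = (\<lambda>i j. if i \<in> Lc then c1 i j else 0)"
      have c0x: "x = dict_apply b m {1..n} c0"
        unfolding c0_def using dict_restrict[of "{1..n}" Lc b m c1] c1(1) unfolding Lc_def by simp
      have c0cost: "(\<Sum>i\<in>{1..n}. block_norm q m c0 i) = (\<Sum>i\<in>Lc. block_norm q m c1 i)"
        unfolding c0_def using cost_restrict[of "{1..n}" Lc q m c1] unfolding Lc_def by simp
      have Vc: "V b m q Lc x = (\<Sum>i\<in>Lc. block_norm q m c1 i)" by (rule V_eq[OF c1])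
      have "(\<Sum>i\<in>{1..n}. block_norm q m c0 i) \<le> V b m q L x"
        using c0cost Vc nl unfolding Lc_def by simp
      also have "\<dots> \<le> (\<Sum>i\<in>L. block_norm q m cst i)" by (rule V_lower[OF xLst])
      finally have le: "(\<Sum>i\<in>{1..n}. block_norm q m c0 i) \<le> (\<Sum>i\<in>{1..n}. block_norm q m cst i)"
        using cstL by simp
      have opt0: "opt_lq_l1 b m n q x c0" unfolding opt_lq_l1_def
        using c0x le cst(2) by force
      have bzc0: "\<forall>i\<in>{1..n} - L. block_zero m c0 i" using H1 L xL opt0 by blast
      have bz0: "\<forall>i\<in>Lc. block_zero m c1 i"
      proof
        fix i assume "i \<in> Lc"
        hence "block_zero m c0 i" using bzc0 unfolding Lc_def by blast
        thus "block_zero m c1 i" using \<open>i \<in> Lc\<close> unfolding c0_def block_zero_def by simp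
      qed
      have "dict_apply b m Lc c1 = 0" unfolding dict_apply_def using bz0 by (simp add: bz_apply)
      thus False using c1(1) x0 by simp
    qed
  qed
next
  have q1: "q \<ge> 1" and q0: "q > 0" using assms(1) by auto
  assume H2: "\<forall>L. L \<subseteq> {1..n} \<and> card L = k \<longrightarrow>
            (\<forall>x\<in>block_sum_space b m L \<inter> block_sum_space b m ({1..n} - L). x \<noteq> 0 \<longrightarrow>
               V b m q L x < V b m q ({1..n} - L) x)"
  show "\<forall>L. L \<subseteq> {1..n} \<and> card L = k \<longrightarrow>
            (\<forall>y\<in>block_sum_space b m L. \<forall>c. opt_lq_l1 b m n q y c \<longrightarrow>
               (\<forall>i\<in>{1..n} - L. block_zero m c i))"
  proof (intro allI impI ballI)
    fix L y c i0 assume L: "L \<subseteq> {1..n} \<and> card L = k" and y: "y \<in> block_sum_space b m L"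
      and opt: "opt_lq_l1 b m n q y c" and i0: "i0 \<in> {1..n} - L"
    define Lc where "Lc = {1..n} - L"
    have fL: "finite L" using L finite_subset by blast
    have fLc: "finite Lc" unfolding Lc_def by simp
    have un: "{1..n} = L \<union> Lc" "L \<inter> Lc = {}" unfolding Lc_def using L by auto
    show "block_zero m c i0"
    proof (rule ccontr)
      assume nz: "\<not> block_zero m c i0"
      have yc: "y = dict_apply b m {1..n} c" using opt unfolding opt_lq_l1_def by blast
      have ysplit: "dict_apply b m {1..n} c = dict_apply b m L c + dict_apply b m Lc c"
        unfolding dict_apply_def un(1) using fL fLc un(2) by (rule sum.union_disjoint)
      have csplit: "(\<Sum>i\<in>{1..n}. block_norm q m c i) = (\<Sum>i\<in>L. block_norm q m c i) + (\<Sum>i\<in>Lc. block_norm q m c i)"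
        unfolding un(1) using fL fLc un(2) by (rule sum.union_disjoint)
      have "block_norm q m c i0 > 0" using nz bn_zero[OF q0] bn_nonneg
        by (metis less_eq_real_def)
      also have "block_norm q m c i0 \<le> (\<Sum>i\<in>Lc. block_norm q m c i)"
        using i0 fLc unfolding Lc_def by (intro member_le_sum) (auto simp: bn_nonneg)
      finally have pos: "(\<Sum>i\<in>Lc. block_norm q m c i) > 0" .
      define x where "x = dict_apply b m Lc c"
      obtain d where d: "x = dict_apply b m L d" "(\<Sum>i\<in>L. block_norm q m d i) < (\<Sum>i\<in>Lc. block_norm q m c i)"
      proof (cases "x = 0")
        case True
        show ?thesis
          by (rule that[of "\<lambda>i j. 0"]) (use True pos in \<open>simp_all add: dict_apply_zero cost_zero\<close>)
      next
        case False
        have "x = y - dict_apply b m L c" unfolding x_def using yc ysplit by simp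
        hence xL: "x \<in> block_sum_space b m L"
          using y dict_apply_in[of b m L c] unfolding block_sum_space_def by (simp add: span_diff)
        have xLc: "x \<in> block_sum_space b m ({1..n} - L)" unfolding x_def Lc_def by (rule dict_apply_in)
        have "V b m q L x < V b m q ({1..n} - L) x" using H2 L xL xLc False by blast
        also have "\<dots> \<le> (\<Sum>i\<in>Lc. block_norm q m c i)" unfolding Lc_def
          by (rule V_lower) (simp add: x_def Lc_def)
        finally have "V b m q L x < (\<Sum>i\<in>Lc. block_norm q m c i)" .
        moreover obtain c2 where "x = dict_apply b m L c2" using sum_space_rep[OF fL xL] by blast
        ultimately show ?thesis using V_less that by blast
      qed
      define c' where "c' = (\<lambda>i j. if i \<in> L then c i j + d i j else 0)"
      have "dict_apply b m {1..n} c' = dict_apply b m L (\<lambda>i j. c i j + d i j)"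
        unfolding c'_def using dict_restrict[of "{1..n}" L b m "\<lambda>i j. c i j + d i j"] L by simp
      also have "\<dots> = y" using dict_apply_add yc ysplit d(1) x_def by simp
      finally have c'y: "y = dict_apply b m {1..n} c'" by simp
      have "(\<Sum>i\<in>{1..n}. block_norm q m c' i) = (\<Sum>i\<in>L. block_norm q m (\<lambda>i j. c i j + d i j) i)"
        unfolding c'_def using cost_restrict[of "{1..n}" L q m "\<lambda>i j. c i j + d i j"] L by simp
      also have "\<dots> \<le> (\<Sum>i\<in>L. block_norm q m c i + block_norm q m d i)"
        by (rule sum_mono) (rule bn_triangle[OF q1])
      also have "\<dots> < (\<Sum>i\<in>{1..n}. block_norm q m c i)"
        using csplit d(2) by (simp add: sum.distrib)
      finally have "(\<Sum>i\<in>{1..n}. block_norm q m c' i) < (\<Sum>i\<in>{1..n}. block_norm q m c i)" .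
      moreover have "(\<Sum>i\<in>{1..n}. block_norm q m c i) \<le> (\<Sum>i\<in>{1..n}. block_norm q m c' i)"
        using opt c'y unfolding opt_lq_l1_def by blast
      ultimately show False by simp
    qed
  qed
qed


end
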